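(* Let $n,m$ be integers with $n-|m|$ even and non-negative, and define the radial Zernike polynomial $R_n^{|m|}(r)=r^{|m|}\,P^{(0,|m|)}_{\frac{n-|m|}{2}}(2r^2-1)$ for $0\le r\le 1$. Then for every integer $k\ge 0$, \[ \max_{0\le r\le 1}\bigl|(R_n^{|m|})^{(k)}(r)\bigr|\;\le\;\frac{n^2(n^2-1^2)\cdots(n^2-(k-1)^2)}{2^k\,(1/2)_k}, \] where the right-hand side is interpreted as $1$ when $k=0$.
   Context: $P_p^{(\alpha,\beta)}$ denotes the Jacobi polynomial of degree $p$ orthogonal with respect to the weight $(1-x)^\alpha(1+x)^\beta$ on $[-1,1]$, with the standard normalization $P_p^{(\alpha,\beta)}(1)=\binom{p+\alpha}{p}$. $f^{(k)}$ denotes the $k$-th derivative of $f$. $(\alpha)_0=1$ and $(\alpha)_k=\alpha(\alpha+1)\cdots(\alpha+k-1)$ for $k\ge1$ (Pochhammer symbol). *)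

theory Defs
  imports "HOL-Analysis.Analysis"
begin

text \<open>Jacobi polynomial P_p^(alpha,beta)(x), standard normalization
  P_p^(alpha,beta)(1) = binom(p+alpha, p), via the explicit formula
  P_p^(a,b)(x) = sum_s binom(p+a, p-s) binom(p+b, s) ((x-1)/2)^s ((x+1)/2)^(p-s).\<close>
definition jacobi_poly :: "nat \<Rightarrow> real \<Rightarrow> real \<Rightarrow> real \<Rightarrow> real" where
  "jacobi_poly p a b x =
     (\<Sum>s\<le>p. ((real p + a) gchoose (p - s)) * ((real p + b) gchoose s)
              * ((x - 1) / 2) ^ s * ((x + 1) / 2) ^ (p - s))"

definition zernike_radial :: "int \<Rightarrow> int \<Rightarrow> real \<Rightarrow> real" where
  "zernike_radial n m r =
     r ^ nat \<bar>m\<bar> * jacobi_poly (nat ((n - \<bar>m\<bar>) div 2)) 0 (of_int \<bar>m\<bar>) (2 * r\<^sup>2 - 1)"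

end

theory Submission
  imports Defs "HOL-Computational_Algebra.Polynomial"
begin


fun cheb :: "nat \<Rightarrow> real poly" where
  "cheb 0 = 1"
| "cheb (Suc 0) = [:0,1:]"
| "cheb (Suc (Suc n)) = [:0,2:] * cheb (Suc n) - cheb n"

fun chebU :: "nat \<Rightarrow> real poly" where
  "chebU 0 = 1"
| "chebU (Suc 0) = [:0,2:]"
| "chebU (Suc (Suc n)) = [:0,2:] * chebU (Suc n) - chebU n"

lemma evT: "poly (cheb (Suc (Suc n))) x = 2 * x * poly (cheb (Suc n)) x - poly (cheb n) x"
  by simp
lemma evU: "poly (chebU (Suc (Suc n))) x = 2 * x * poly (chebU (Suc n)) x - poly (chebU n) x"
  by simp
lemma evT0: "poly (cheb 0) x = 1" and evT1: "poly (cheb (Suc 0)) x = x"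
  and evU0: "poly (chebU 0) x = 1" and evU1: "poly (chebU (Suc 0)) x = 2 * x"
  by simp_all

declare cheb.simps(3)[simp del] chebU.simps(3)[simp del]

lemma cheb_cos: "poly (cheb n) (cos t) = cos (real n * t)"
proof (induction n rule: cheb.induct)
  case (3 n)
  define A where "A = real (Suc n) * t"
  have e1: "real (Suc (Suc n)) * t = A + t" unfolding A_def by (simp add: algebra_simps)
  have e2: "real n * t = A - t" unfolding A_def by (simp add: algebra_simps)
  have "poly (cheb (Suc (Suc n))) (cos t) = 2 * cos t * cos A - cos (real n * t)"
    unfolding evT 3 A_def by simp
  also have "\<dots> = 2 * cos t * cos A - cos (A - t)" using e2 by simp
  also have "\<dots> = cos (A + t)" by (simp add: cos_add cos_diff)
  finally show ?case using e1 by simp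
qed auto

lemma cheb_one: "poly (cheb n) 1 = 1"
  using cheb_cos[of n 0] by simp

lemma cheb_bound: assumes "\<bar>x\<bar> \<le> 1" shows "\<bar>poly (cheb n) x\<bar> \<le> 1"
proof -
  have "x = cos (arccos x)" using assms by simp
  then show ?thesis using cheb_cos[of n "arccos x"] by (metis abs_cos_le_one)
qed

lemma L1: "poly (cheb (Suc (Suc n))) x = x * poly (chebU (Suc n)) x - poly (chebU n) x
   \<and> poly (cheb (Suc (Suc (Suc n)))) x = x * poly (chebU (Suc (Suc n))) x - poly (chebU (Suc n)) x"
proof (induction n)
  case 0
  then show ?case by (simp add: evT evU algebra_simps)
next
  case (Suc n)
  have "poly (cheb (Suc (Suc (Suc (Suc n))))) x = x * poly (chebU (Suc (Suc (Suc n)))) x - poly (chebU (Suc (Suc n))) x"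
    by (simp add: evT[of "Suc (Suc n)"] evU[of "Suc n"] evU[of n] Suc.IH[THEN conjunct1] Suc.IH[THEN conjunct2] algebra_simps)
  then show ?case using Suc by simp
qed

lemma L1': "poly (cheb (Suc (Suc n))) x = x * poly (chebU (Suc n)) x - poly (chebU n) x"
  using L1 by blast

lemma L5: "poly (chebU (Suc n)) x = x * poly (chebU n) x + poly (cheb (Suc n)) x"
proof (cases n)
  case 0 then show ?thesis by simp
next
  case (Suc k)
  then show ?thesis by (simp add: evU L1' algebra_simps)
qed

lemma L2: "chebU (Suc (Suc n)) = chebU n + smult 2 (cheb (Suc (Suc n)))"
proof (rule poly_ext)
  fix x show "poly (chebU (Suc (Suc n))) x = poly (chebU n + smult 2 (cheb (Suc (Suc n)))) x"
    by (simp add: evU L1' algebra_simps)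
qed

lemma L3: "pderiv (cheb (Suc n)) = smult (real (Suc n)) (chebU n)"
proof (induction n rule: nat_less_induct)
  case (1 n)
  show ?case
  proof (cases n)
    case 0 then show ?thesis by (simp add: pderiv_pCons)
  next
    case (Suc k)
    note S = Suc
    have D: "pderiv (cheb (Suc (Suc k))) = [:0,2:] * pderiv (cheb (Suc k)) + smult 2 (cheb (Suc k)) - pderiv (cheb k)"
      by (simp add: cheb.simps(3) pderiv_mult pderiv_diff pderiv_pCons pderiv_smult)
    have IH1: "pderiv (cheb (Suc k)) = smult (real (Suc k)) (chebU k)" using 1 S by simp
    show ?thesis
    proof (cases k)
      case 0 then show ?thesis using S D IH1 by (simp add: numeral_2_eq_2)
    next
      case (Suc j)
      have IH2: "pderiv (cheb (Suc j)) = smult (real (Suc j)) (chebU j)" using 1 S Suc by simp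
      show ?thesis
      proof (intro poly_ext)
        fix x
        have "poly (pderiv (cheb (Suc n))) x = 2 * x * (real (Suc k) * poly (chebU k) x) + 2 * poly (cheb (Suc k)) x - real (Suc j) * poly (chebU j) x"
          using D IH1 IH2 S Suc by simp
        also have "\<dots> = real (Suc n) * poly (chebU n) x"
          using S Suc by (simp add: evU L1' algebra_simps)
        finally show "poly (pderiv (cheb (Suc n))) x = poly (smult (real (Suc n)) (chebU n)) x" by simp
      qed
    qed
  qed
qed

lemma L4: "(1 - x^2) * poly (chebU n) x = x * poly (cheb (Suc n)) x - poly (cheb (Suc (Suc n))) x"
  by (simp add: L1' L5 power2_eq_square algebra_simps)

lemma ODE: "[:1,0,-1:] * pderiv (pderiv (cheb j)) - [:0,1:] * pderiv (cheb j) + smult ((real j)^2) (cheb j) = 0"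
proof (cases j)
  case 0 then show ?thesis by simp
next
  case (Suc i)
  define J where "J = real (Suc i)"
  have E1: "[:1,0,-1:] * pderiv (cheb (Suc i)) = smult J ([:0,1:] * cheb (Suc i) - cheb (Suc (Suc i)))"
  proof (rule poly_ext)
    fix x
    have "poly ([:1,0,-1:] * pderiv (cheb (Suc i))) x = J * ((1 - x^2) * poly (chebU i) x)"
      unfolding L3 J_def by (simp add: power2_eq_square algebra_simps)
    also have "\<dots> = J * (x * poly (cheb (Suc i)) x - poly (cheb (Suc (Suc i))) x)" by (simp only: L4)
    finally show "poly ([:1,0,-1:] * pderiv (cheb (Suc i))) x = poly (smult J ([:0,1:] * cheb (Suc i) - cheb (Suc (Suc i)))) x"
      by simp
  qed
  have E2: "pderiv ([:1,0,-1:] * pderiv (cheb (Suc i))) = pderiv (smult J ([:0,1:] * cheb (Suc i) - cheb (Suc (Suc i))))"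
    using E1 by simp
  show ?thesis
  proof (rule poly_ext)
    fix x
    have e: "poly (pderiv ([:1,0,-1:] * pderiv (cheb (Suc i)))) x = poly (pderiv (smult J ([:0,1:] * cheb (Suc i) - cheb (Suc (Suc i))))) x"
      using E2 by simp
    have e2: "-2 * x * (J * poly (chebU i) x) + (1 - x^2) * poly (pderiv (pderiv (cheb (Suc i)))) x
       = J * (poly (cheb (Suc i)) x + x * (J * poly (chebU i) x) - (J+1) * (x * poly (chebU i) x + poly (cheb (Suc i)) x))"
      using e L5[of i x] unfolding pderiv_mult pderiv_smult pderiv_diff
      by (simp add: pderiv_pCons L3 J_def power2_eq_square algebra_simps)
    have e3: "(1 - x^2) * poly (pderiv (pderiv (cheb (Suc i)))) x = x * J * poly (chebU i) x - J^2 * poly (cheb (Suc i)) x"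
      using e2 by (simp add: power2_eq_square algebra_simps)
    show "poly ([:1,0,-1:] * pderiv (pderiv (cheb j)) - [:0,1:] * pderiv (cheb j) + smult ((real j)^2) (cheb j)) x = poly 0 x"
      using e3 unfolding Suc J_def by (simp add: L3 power2_eq_square algebra_simps)
  qed
qed

lemma Hk: "[:1,0,-1:] * (pderiv^^(Suc (Suc k))) (cheb j) - smult (2 * real k + 1) ([:0,1:] * (pderiv^^(Suc k)) (cheb j))
   + smult ((real j)^2 - (real k)^2) ((pderiv^^k) (cheb j)) = 0"
proof (induction k)
  case 0 then show ?case using ODE[of j] by simp
next
  case (Suc k)
  define y where "y = (\<lambda>k. (pderiv^^k) (cheb j))"
  have ys: "\<And>k. y (Suc k) = pderiv (y k)" unfolding y_def by simp
  have "pderiv ([:1,0,-1:] * y (Suc (Suc k)) - smult (2 * real k + 1) ([:0,1:] * y (Suc k))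
   + smult ((real j)^2 - (real k)^2) (y k)) = 0" using Suc unfolding y_def by simp
  then have "[:1,0,-1:] * y (Suc (Suc (Suc k))) - smult (2 * real (Suc k) + 1) ([:0,1:] * y (Suc (Suc k)))
   + smult ((real j)^2 - (real (Suc k))^2) (y (Suc k)) = 0"
    unfolding pderiv_add pderiv_diff pderiv_mult pderiv_smult ys[symmetric]
  proof -
    assume h: "[:1, 0, - 1:] * y (Suc (Suc (Suc k))) + y (Suc (Suc k)) * pderiv [:1, 0, - 1:] -
    smult (2 * real k + 1) ([:0, 1:] * y (Suc (Suc k)) + y (Suc k) * pderiv [:0, 1:]) +
    smult ((real j)\<^sup>2 - (real k)\<^sup>2) (y (Suc k)) = 0"
    show ?thesis
    proof (rule poly_ext)
      fix x
      have "poly ([:1, 0, - 1:] * y (Suc (Suc (Suc k))) + y (Suc (Suc k)) * pderiv [:1, 0, - 1:] -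
        smult (2 * real k + 1) ([:0, 1:] * y (Suc (Suc k)) + y (Suc k) * pderiv [:0, 1:]) +
        smult ((real j)\<^sup>2 - (real k)\<^sup>2) (y (Suc k))) x = 0" using h by simp
      then show "poly ([:1,0,-1:] * y (Suc (Suc (Suc k))) - smult (2 * real (Suc k) + 1) ([:0,1:] * y (Suc (Suc k)))
         + smult ((real j)^2 - (real (Suc k))^2) (y (Suc k))) x = poly 0 x"
        by (simp add: pderiv_pCons power2_eq_square algebra_simps)
    qed
  qed
  then show ?case unfolding y_def by simp
qed

definition Mk :: "real \<Rightarrow> nat \<Rightarrow> real" where
  "Mk j k = (\<Prod>i<k. (j^2 - (real i)^2) / (2 * real i + 1))"

lemma deriv_cheb_one: "poly ((pderiv^^k) (cheb j)) 1 = Mk (real j) k"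
proof (induction k)
  case 0 then show ?case by (simp add: Mk_def cheb_one)
next
  case (Suc k)
  have "poly ([:1,0,-1:] * (pderiv^^(Suc (Suc k))) (cheb j) - smult (2 * real k + 1) ([:0,1:] * (pderiv^^(Suc k)) (cheb j))
   + smult ((real j)^2 - (real k)^2) ((pderiv^^k) (cheb j))) 1 = 0" using Hk[of k j] by simp
  then have "(2 * real k + 1) * poly ((pderiv^^(Suc k)) (cheb j)) 1 = ((real j)^2 - (real k)^2) * poly ((pderiv^^k) (cheb j)) 1"
    by simp
  then have "poly ((pderiv^^(Suc k)) (cheb j)) 1 = ((real j)^2 - (real k)^2) / (2 * real k + 1) * poly ((pderiv^^k) (cheb j)) 1"
    by (simp add: field_simps add_pos_pos)
  then show ?case using Suc by (simp add: Mk_def)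
qed

inductive cnn :: "real poly \<Rightarrow> bool" where
  cnn0: "cnn 0"
| cnnS: "cnn p \<Longrightarrow> c \<ge> 0 \<Longrightarrow> cnn (p + smult c (cheb j))"

lemma cnn_add: "cnn q \<Longrightarrow> cnn p \<Longrightarrow> cnn (p + q)"
proof (induction q rule: cnn.induct)
  case cnn0 then show ?case by simp
next
  case (cnnS q c j)
  then show ?case using cnn.cnnS[of "p + q" c j] by (simp add: add.assoc)
qed

lemma cnn_smult: "cnn p \<Longrightarrow> c \<ge> 0 \<Longrightarrow> cnn (smult c p)"
proof (induction p rule: cnn.induct)
  case cnn0 then show ?case by (simp add: cnn.cnn0)
next
  case (cnnS p d j)
  then show ?case using cnn.cnnS[of "smult c p" "c * d" j] by (simp add: smult_add_right)
qed

lemma cnn_cheb: "c \<ge> 0 \<Longrightarrow> cnn (smult c (cheb j))"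
  using cnn.cnnS[OF cnn.cnn0, of c j] by simp

lemma cnn_U: "cnn (chebU n) \<and> cnn (chebU (Suc n))"
proof (induction n)
  case 0
  have "chebU 0 = smult 1 (cheb 0)" "chebU (Suc 0) = smult 2 (cheb 1)" by simp_all
  then show ?case using cnn_cheb by (metis zero_le_one zero_le_numeral)
next
  case (Suc n)
  then show ?case using L2[of n] cnn_add[OF cnn_cheb[of 2 "Suc (Suc n)"]] by simp
qed

lemma cnn_pderiv: "cnn p \<Longrightarrow> cnn (pderiv p)"
proof (induction p rule: cnn.induct)
  case cnn0 then show ?case by (simp add: cnn.cnn0)
next
  case (cnnS p c j)
  have "cnn (pderiv (cheb j))"
  proof (cases j)
    case 0 then show ?thesis by (simp add: cnn.cnn0)
  next
    case (Suc i) then show ?thesis using L3[of i] cnn_U[of i] cnn_smult by simp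
  qed
  then show ?case using cnnS by (simp add: pderiv_add pderiv_smult cnn_add cnn_smult)
qed

lemma cnn_pderivs: "cnn p \<Longrightarrow> cnn ((pderiv^^k) p)"
  by (induction k) (auto simp: cnn_pderiv)

lemma cnn_bound: "cnn p \<Longrightarrow> \<bar>x\<bar> \<le> 1 \<Longrightarrow> \<bar>poly p x\<bar> \<le> poly p 1"
proof (induction p rule: cnn.induct)
  case cnn0 then show ?case by simp
next
  case (cnnS p c j)
  have "\<bar>poly (cheb j) x\<bar> \<le> 1" using cheb_bound cnnS by simp
  then have "\<bar>c * poly (cheb j) x\<bar> \<le> c" using \<open>c \<ge> 0\<close>
    by (simp add: abs_mult mult_left_le)
  then show ?case using cnnS by (simp add: cheb_one)
qed



lemma LP: "coeff ([:d, c:] ^ e) p = of_nat (e choose p) * c ^ p * (d::'a::comm_semiring_1) ^ (e - p)"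
proof (cases "p \<le> e")
  case True then show ?thesis by (rule coeff_linear_poly_power)
next
  case False
  have "degree ([:d, c:] ^ e) \<le> degree [:d,c:] * e" by (rule degree_power_le)
  also have "\<dots> \<le> e" by simp
  finally have "coeff ([:d, c:] ^ e) p = 0" using False by (intro coeff_eq_0) simp
  then show ?thesis using False by (simp add: binomial_eq_0)
qed

lemma HOM:
  fixes U V c1 d1 c2 d2 :: complex
  assumes "V \<noteq> 0"
  shows "(c1*U + d1*V)^e1 * (c2*U + d2*V)^e2 =
     (\<Sum>k\<le>e1+e2. coeff ([:d1,c1:]^e1 * [:d2,c2:]^e2) k * U^k * V^(e1+e2-k))"
proof -
  define G where "G = [:d1,c1:]^e1 * [:d2,c2:]^e2"
  have dG: "degree G \<le> e1 + e2"
  proof -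
    have "degree G \<le> degree ([:d1,c1:]^e1) + degree ([:d2,c2:]^e2)" unfolding G_def by (rule degree_mult_le)
    also have "\<dots> \<le> degree [:d1,c1:] * e1 + degree [:d2,c2:] * e2"
      by (intro add_mono degree_power_le)
    also have "\<dots> \<le> e1 + e2" by (intro add_mono) auto
    finally show ?thesis .
  qed
  have pG: "poly G y = (\<Sum>k\<le>e1+e2. coeff G k * y^k)" for y
  proof -
    have "poly G y = poly (\<Sum>k\<le>e1+e2. monom (coeff G k) k) y"
      using poly_as_sum_of_monoms'[OF dG] by simp
    also have "\<dots> = (\<Sum>k\<le>e1+e2. coeff G k * y^k)" by (simp add: poly_sum poly_monom)
    finally show ?thesis .
  qed
  have "V^(e1+e2) * poly G (U/V) = (\<Sum>k\<le>e1+e2. coeff G k * (V^(e1+e2) * (U/V)^k))"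
    unfolding pG by (simp add: sum_distrib_left algebra_simps)
  also have "\<dots> = (\<Sum>k\<le>e1+e2. coeff G k * U^k * V^(e1+e2-k))"
  proof (rule sum.cong)
    fix k assume "k \<in> {..e1+e2}"
    then have "V^(e1+e2) = V^k * V^(e1+e2-k)" by (simp add: power_add[symmetric])
    then show "coeff G k * (V^(e1+e2) * (U/V)^k) = coeff G k * U^k * V^(e1+e2-k)"
      using assms by (simp add: power_divide field_simps)
  qed simp
  finally have 1: "V^(e1+e2) * poly G (U/V) = (\<Sum>k\<le>e1+e2. coeff G k * U^k * V^(e1+e2-k))" .
  have "V^(e1+e2) * poly G (U/V) = (V * (d1 + U/V*c1))^e1 * (V * (d2 + U/V*c2))^e2"
    unfolding G_def by (simp add: power_add power_mult_distrib)
  moreover have "V * (d1 + U/V*c1) = c1*U + d1*V" "V * (d2 + U/V*c2) = c2*U + d2*V"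
    using assms by (simp_all add: field_simps)
  ultimately show ?thesis using 1 unfolding G_def by simp
qed

lemma ext_except:
  fixes p q :: "complex poly"
  assumes "\<And>x. x \<noteq> z \<Longrightarrow> poly p x = poly q x"
  shows "p = q"
proof (rule ccontr)
  assume "p \<noteq> q"
  then have "p - q \<noteq> 0" by simp
  then have "finite {x. poly (p - q) x = 0}" by (rule poly_roots_finite)
  moreover have "UNIV - {z} \<subseteq> {x. poly (p - q) x = 0}" using assms by auto
  ultimately have "finite (UNIV - {z} :: complex set)" by (rule finite_subset[rotated])
  then have "finite (UNIV :: complex set)" by simp
  then show False using infinite_UNIV_char_0 by blast
qed

lemma Lp_decomp:
  fixes t :: real
  defines "w \<equiv> cis t" and "r \<equiv> complex_of_real (cos t)" and "s \<equiv> complex_of_real (sin t)"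
  shows "[:r,s:]^b * [:-s,r:]^a = (\<Sum>k\<le>b+a. smult (coeff ([:-1/(2*\<i>), 1/(2*\<i>):]^b * [:1/2,1/2:]^a) k * w^k * cnj w^(b+a-k)) ([:\<i>,1:]^k * [:-\<i>,1:]^(b+a-k)))"
proof (rule ext_except[where z = "\<i>"])
  fix x :: complex assume x: "x \<noteq> \<i>"
  have w: "w = r + \<i> * s" and cw: "cnj w = r - \<i> * s" unfolding w_def r_def s_def
    by (simp_all add: complex_eq_iff)
  define U where "U = w * (x + \<i>)"
  define V where "V = cnj w * (x - \<i>)"
  have cr: "cnj r = r" "cnj s = s" unfolding r_def s_def by simp_all
  have V0: "V \<noteq> 0" unfolding V_def w_def using x by simp
  have e1: "r + x * s = (1/(2*\<i>)) * U + (-1/(2*\<i>)) * V" unfolding U_def V_def cw w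
    by (simp add: field_simps cr)
  have e2: "-s + x * r = (1/2) * U + (1/2) * V" unfolding U_def V_def cw w
    by (simp add: field_simps cr)
  have "poly ([:r,s:]^b * [:-s,r:]^a) x = (r + x * s)^b * (-s + x * r)^a"
    by simp
  also have "\<dots> = ((1/(2*\<i>)) * U + (-1/(2*\<i>)) * V)^b * ((1/2) * U + (1/2) * V)^a"
    by (simp only: e1 e2)
  also have "\<dots> = (\<Sum>k\<le>b+a. coeff ([:-1/(2*\<i>), 1/(2*\<i>):]^b * [:1/2,1/2:]^a) k * U^k * V^(b+a-k))"
    by (rule HOM[OF V0])
  also have "\<dots> = poly (\<Sum>k\<le>b+a. smult (coeff ([:-1/(2*\<i>), 1/(2*\<i>):]^b * [:1/2,1/2:]^a) k * w^k * cnj w^(b+a-k)) ([:\<i>,1:]^k * [:-\<i>,1:]^(b+a-k))) x"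
    unfolding U_def V_def by (simp add: poly_sum power_mult_distrib mult_ac add.commute)
  finally show "poly ([:r,s:]^b * [:-s,r:]^a) x = poly (\<Sum>k\<le>b+a. smult (coeff ([:-1/(2*\<i>), 1/(2*\<i>):]^b * [:1/2,1/2:]^a) k * w^k * cnj w^(b+a-k)) ([:\<i>,1:]^k * [:-\<i>,1:]^(b+a-k))) x" .
qed

lemma pow_split: "q \<le> e \<Longrightarrow> (z::'a::monoid_mult)^q * z^(e-q) = z^e"
  by (simp add: power_add[symmetric])

lemma pow_split_neg: "q \<le> e \<Longrightarrow> (z::'a::comm_ring_1)^q * (-z)^(e-q) = (-1)^(e-q) * z^e"
proof -
  assume "q \<le> e"
  then have "z^q * z^(e-q) = z^e" by (rule pow_split)
  moreover have "(-z)^(e-q) = (-1)^(e-q) * z^(e-q)" by (rule power_minus)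
  ultimately show ?thesis by (metis mult.left_commute)
qed

definition Aq :: "nat \<Rightarrow> nat \<Rightarrow> nat \<Rightarrow> real" where
  "Aq a b k = (\<Sum>q\<le>k. (-1)^(b-q) * real (b choose q) * real (a choose (k-q)))"

definition Bp :: "nat \<Rightarrow> nat \<Rightarrow> nat \<Rightarrow> real" where
  "Bp a b k = (\<Sum>p\<le>a. (-1)^((b+a-k)-(a-p)) * real (k choose p) * real ((b+a-k) choose (a-p)))"

lemma claim1: "coeff ([:-1/(2*\<i>), 1/(2*\<i>):]^b * [:1/2,1/2:]^a) k = (1/(2*\<i>))^b * (1/2)^a * complex_of_real (Aq a b k)"
proof -
  have "coeff ([:-1/(2*\<i>), 1/(2*\<i>):]^b * [:1/2,1/2:]^a) k =
     (\<Sum>q\<le>k. (1/(2*\<i>))^b * (1/2)^a * complex_of_real ((-1)^(b-q) * real (b choose q) * real (a choose (k-q))))"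
    unfolding coeff_mult
  proof (rule sum.cong)
    fix q assume "q \<in> {..k}"
    then have qk: "q \<le> k" by simp
    show "coeff ([:- 1 / (2 * \<i>), 1 / (2 * \<i>):] ^ b) q * coeff ([:1 / 2, 1 / 2:] ^ a) (k - q) =
         (1/(2*\<i>))^b * (1/2)^a * complex_of_real ((-1)^(b-q) * real (b choose q) * real (a choose (k-q)))"
    proof (cases "q \<le> b \<and> k - q \<le> a")
      case True
      have h1: "(1/(2*\<i>))^q * (-1/(2*\<i>))^(b-q) = (-1)^(b-q) * (1/(2*\<i>))^b"
        using pow_split_neg[of q b "1/(2*\<i>)"] True by simp
      have h2: "(1/2::complex)^(k-q) * (1/2)^(a-(k-q)) = (1/2)^a"
        using pow_split[of "k-q" a "1/2::complex"] True by simp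
      show ?thesis unfolding LP
        using h1 h2 by (simp add: algebra_simps)
    next
      case False
      then have "b choose q = 0 \<or> a choose (k-q) = 0" by auto
      then show ?thesis unfolding LP by auto
    qed
  qed simp
  also have "\<dots> = (1/(2*\<i>))^b * (1/2)^a * complex_of_real (Aq a b k)"
    unfolding Aq_def of_real_sum sum_distrib_left by simp
  finally show ?thesis .
qed

lemma claim2: assumes "k \<le> b + a"
  shows "coeff ([:\<i>,1:]^k * [:-\<i>,1:]^(b+a-k)) a = \<i>^b * complex_of_real (Bp a b k)"
proof -
  have "coeff ([:\<i>,1:]^k * [:-\<i>,1:]^(b+a-k)) a =
     (\<Sum>p\<le>a. \<i>^b * complex_of_real ((-1)^((b+a-k)-(a-p)) * real (k choose p) * real ((b+a-k) choose (a-p))))"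
    unfolding coeff_mult
  proof (rule sum.cong)
    fix p assume "p \<in> {..a}"
    then have pa: "p \<le> a" by simp
    show "coeff ([:\<i>,1:]^k) p * coeff ([:-\<i>,1:]^(b+a-k)) (a - p) =
       \<i>^b * complex_of_real ((-1)^((b+a-k)-(a-p)) * real (k choose p) * real ((b+a-k) choose (a-p)))"
    proof (cases "p \<le> k \<and> a - p \<le> b + a - k")
      case True
      have e: "(k - p) + ((b+a-k)-(a-p)) = b" using True pa assms by linarith
      have "\<i>^(k-p) * (-\<i>)^((b+a-k)-(a-p)) = (-1)^((b+a-k)-(a-p)) * \<i>^((k - p) + ((b+a-k)-(a-p)))"
        by (simp add: power_minus[of \<i>] power_add)
      then have h: "\<i>^(k-p) * (-\<i>)^((b+a-k)-(a-p)) = (-1)^((b+a-k)-(a-p)) * \<i>^b" unfolding e .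
      show ?thesis unfolding LP using h by (simp add: algebra_simps)
    next
      case False
      then have "k choose p = 0 \<or> (b+a-k) choose (a-p) = 0" by auto
      then show ?thesis unfolding LP by auto
    qed
  qed simp
  also have "\<dots> = \<i>^b * complex_of_real (Bp a b k)"
    unfolding Bp_def of_real_sum sum_distrib_left by simp
  finally show ?thesis .
qed

lemma claim3: assumes kn: "k \<le> b + a"
  shows "Aq a b k * (fact k * fact (b+a-k)) = Bp a b k * (fact a * fact b)"
proof -
  define l where "l = b + a - k"
  define f where "f j = (-1)^(b-(k-j)) * real (b choose (k-j)) * real (a choose j)" for j
  define g where "g j = (-1)^(l-(a-j)) * real (k choose j) * real (l choose (a-j))" for j
  have A1: "Aq a b k = (\<Sum>j\<le>k. f j)"
    unfolding Aq_def f_def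
    by (rule sum.reindex_bij_witness[where i="\<lambda>j. k - j" and j="\<lambda>j. k - j"]) auto
  have A2: "(\<Sum>j\<le>k. f j) = (\<Sum>j\<le>min a k. f j)"
    by (rule sum.mono_neutral_right) (auto simp: f_def)
  have B1: "Bp a b k = (\<Sum>j\<le>a. g j)" unfolding Bp_def g_def l_def by simp
  have B2: "(\<Sum>j\<le>a. g j) = (\<Sum>j\<le>min a k. g j)"
    by (rule sum.mono_neutral_right) (auto simp: g_def)
  have T: "f j * (fact k * fact l) = g j * (fact a * fact b)" if j: "j \<le> min a k" for j
  proof (cases "k - j \<le> b")
    case True
    have la: "a - j \<le> l" "l - (a - j) = b - (k - j)" using True j kn unfolding l_def by auto
    have "f j * (fact k * fact l) = (-1)^(b-(k-j)) * (fact b / (fact (k-j) * fact (b - (k-j))) * (fact a / (fact j * fact (a-j))) * (fact k * fact l))"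
      unfolding f_def using True j by (simp add: binomial_fact)
    also have "\<dots> = (-1)^(l-(a-j)) * (fact k / (fact j * fact (k-j)) * (fact l / (fact (a-j) * fact (l - (a-j)))) * (fact a * fact b))"
      unfolding la(2) by (simp add: field_simps)
    also have "\<dots> = g j * (fact a * fact b)"
      unfolding g_def using la j by (simp add: binomial_fact)
    finally show ?thesis .
  next
    case False
    then have "a - j > l" using j kn unfolding l_def by auto
    then show ?thesis using False unfolding f_def g_def by (simp add: binomial_eq_0)
  qed
  have "Aq a b k * (fact k * fact (b+a-k)) = (\<Sum>j\<le>min a k. f j * (fact k * fact l))"
    unfolding A1 A2 l_def sum_distrib_right ..
  also have "\<dots> = (\<Sum>j\<le>min a k. g j * (fact a * fact b))"
    by (rule sum.cong) (auto simp: T)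
  also have "\<dots> = Bp a b k * (fact a * fact b)"
    unfolding B1 B2 sum_distrib_right ..
  finally show ?thesis .
qed

lemma AB_nonneg: assumes "k \<le> b + a" shows "Aq a b k * Bp a b k \<ge> 0"
proof -
  have pos: "(fact k * fact (b+a-k) :: real) > 0" by simp
  have "Aq a b k = Bp a b k * (fact a * fact b) / (fact k * fact (b+a-k))"
    using claim3[OF assms] pos by (simp add: field_simps)
  then have "Aq a b k * Bp a b k = (Bp a b k)^2 * ((fact a * fact b) / (fact k * fact (b+a-k)))"
    by (simp add: power2_eq_square)
  also have "\<dots> \<ge> 0" by (intro mult_nonneg_nonneg) simp_all
  finally show ?thesis by simp
qed

lemma key:
  fixes t :: real
  shows "(\<Sum>i\<le>a. real (b choose i) * sin t ^ i * cos t ^ (b-i) * (real (a choose (a-i)) * cos t ^ (a-i) * (- sin t) ^ (a-(a-i))))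
     = (\<Sum>k\<le>b+a. Aq a b k * Bp a b k / 2^(b+a) * cos ((real k - real (b+a-k)) * t))"
proof -
  define w where "w = cis t"
  define r where "r = complex_of_real (cos t)"
  define s where "s = complex_of_real (sin t)"
  define G0 where "G0 = [:-1/(2*\<i>), 1/(2*\<i>):]^b * [:1/2,1/2:]^(a::nat)"
  have D: "[:r,s:]^b * [:-s,r:]^a = (\<Sum>k\<le>b+a. smult (coeff G0 k * w^k * cnj w^(b+a-k)) ([:\<i>,1:]^k * [:-\<i>,1:]^(b+a-k)))"
    unfolding w_def r_def s_def G0_def by (rule Lp_decomp)
  have "coeff ([:r,s:]^b * [:-s,r:]^a) a = (\<Sum>k\<le>b+a. coeff G0 k * w^k * cnj w^(b+a-k) * coeff ([:\<i>,1:]^k * [:-\<i>,1:]^(b+a-k)) a)"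
    unfolding D coeff_sum coeff_smult ..
  also have "\<dots> = (\<Sum>k\<le>b+a. complex_of_real (Aq a b k * Bp a b k / 2^(b+a)) * (w^k * cnj w^(b+a-k)))"
  proof (rule sum.cong)
    fix k assume "k \<in> {..b+a}"
    then have k: "k \<le> b + a" by simp
    have "coeff G0 k * coeff ([:\<i>,1:]^k * [:-\<i>,1:]^(b+a-k)) a =
       ((1/(2*\<i>))^b * \<i>^b) * (1/2)^a * complex_of_real (Aq a b k * Bp a b k)"
      unfolding G0_def claim1 claim2[OF k] by (simp add: mult_ac)
    also have "((1/(2*\<i>))^b * \<i>^b) = (1/2)^b" by (simp add: power_mult_distrib[symmetric])
    finally have "coeff G0 k * coeff ([:\<i>,1:]^k * [:-\<i>,1:]^(b+a-k)) a = complex_of_real (Aq a b k * Bp a b k / 2^(b+a))"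
      by (simp add: power_add field_simps)
    then show "coeff G0 k * w^k * cnj w^(b+a-k) * coeff ([:\<i>,1:]^k * [:-\<i>,1:]^(b+a-k)) a
       = complex_of_real (Aq a b k * Bp a b k / 2^(b+a)) * (w^k * cnj w^(b+a-k))"
      by (metis (no_types, lifting) mult.assoc mult.commute)
  qed simp
  finally have C: "coeff ([:r,s:]^b * [:-s,r:]^a) a = (\<Sum>k\<le>b+a. complex_of_real (Aq a b k * Bp a b k / 2^(b+a)) * (w^k * cnj w^(b+a-k)))" .
  have wk: "w^k * cnj w^(b+a-k) = cis ((real k - real (b+a-k)) * t)" for k
    unfolding w_def cis_cnj Complex.DeMoivre cis_mult by (simp add: algebra_simps)
  have "coeff ([:r,s:]^b * [:-s,r:]^a) a = (\<Sum>i\<le>a. coeff ([:r,s:]^b) i * coeff ([:-s,r:]^a) (a-i))"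
    by (rule coeff_mult)
  also have "\<dots> = complex_of_real (\<Sum>i\<le>a. real (b choose i) * sin t ^ i * cos t ^ (b-i) * (real (a choose (a-i)) * cos t ^ (a-i) * (- sin t) ^ (a-(a-i))))"
    unfolding LP of_real_sum r_def s_def by simp
  finally have "complex_of_real (\<Sum>i\<le>a. real (b choose i) * sin t ^ i * cos t ^ (b-i) * (real (a choose (a-i)) * cos t ^ (a-i) * (- sin t) ^ (a-(a-i))))
     = (\<Sum>k\<le>b+a. complex_of_real (Aq a b k * Bp a b k / 2^(b+a)) * cis ((real k - real (b+a-k)) * t))"
    using C wk by simp
  then have "Re (complex_of_real (\<Sum>i\<le>a. real (b choose i) * sin t ^ i * cos t ^ (b-i) * (real (a choose (a-i)) * cos t ^ (a-i) * (- sin t) ^ (a-(a-i)))))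
     = Re (\<Sum>k\<le>b+a. complex_of_real (Aq a b k * Bp a b k / 2^(b+a)) * cis ((real k - real (b+a-k)) * t))"
    by simp
  then show ?thesis by (simp add: Re_sum)
qed



lemma higher_pderiv_smult: "(pderiv ^^ k) (smult c p) = smult c ((pderiv ^^ k) p)"
  by (induction k) (simp_all add: pderiv_smult)

lemma deriv_poly_fun: "deriv (poly p) = poly (pderiv p)"
  by (rule ext) (rule DERIV_imp_deriv[OF poly_DERIV])

lemma higher_deriv_poly: "(deriv ^^ k) (poly p) = poly ((pderiv ^^ k) p)"
  by (induction k) (simp_all add: deriv_poly_fun)

lemma cnn_sum: "finite A \<Longrightarrow> (\<And>k. k \<in> A \<Longrightarrow> c k \<ge> 0) \<Longrightarrow> cnn (\<Sum>k\<in>A. smult (c k) (cheb (d k)))"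
proof (induction A rule: finite_induct)
  case empty then show ?case by (simp add: cnn.cnn0)
next
  case (insert x F)
  then show ?case by (simp add: cnn_add cnn_cheb)
qed

lemma ext_Icc:
  fixes p q :: "real poly"
  assumes "\<And>x. x \<in> {-1..1} \<Longrightarrow> poly p x = poly q x"
  shows "p = q"
proof (rule ccontr)
  assume "p \<noteq> q"
  then have "p - q \<noteq> 0" by simp
  then have "finite {x. poly (p - q) x = 0}" by (rule poly_roots_finite)
  moreover have "{-1..1} \<subseteq> {x. poly (p - q) x = 0}" using assms by auto
  ultimately have "finite {-1..1::real}" by (rule finite_subset[rotated])
  then show False using infinite_Icc[of "-1::real" 1] by simp
qed

lemma Mk_nonneg: "Mk (real N) k \<ge> 0"
proof (cases "k \<le> N")
  case True
  then show ?thesis unfolding Mk_def by (intro prod_nonneg) (auto intro!: divide_nonneg_pos simp: power_mono)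
next
  case False
  then have "N \<in> {..<k}" by simp
  then show ?thesis unfolding Mk_def by (subst prod_zero) (auto intro!: bexI[of _ N])
qed

lemma Mk_mono: assumes "d \<le> N" shows "Mk (real d) k \<le> Mk (real N) k"
proof (cases "k \<le> d")
  case True
  then show ?thesis unfolding Mk_def
    by (intro prod_mono) (auto intro!: divide_nonneg_pos divide_right_mono power_mono simp: assms)
next
  case False
  then have "d \<in> {..<k}" by simp
  then have "Mk (real d) k = 0" unfolding Mk_def by (subst prod_zero) (auto intro!: bexI[of _ d])
  then show ?thesis using Mk_nonneg by simp
qed

lemma main_nat:
  fixes a b m' :: nat
  assumes am: "a = b + m'"
  defines "Z \<equiv> (\<lambda>r::real. r ^ m' * jacobi_poly b 0 (real m') (2 * r^2 - 1))"
  shows "\<forall>r\<in>{-1..1}. \<bar>(deriv^^k) Z r\<bar> \<le> Mk (real (b+a)) k"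
proof -
  define N where "N = b + a"
  define wt where "wt j = Aq a b j * Bp a b j / 2^(b+a)" for j
  define dk where "dk j = (if N \<le> 2*j then 2*j - N else N - 2*j)" for j
  define Cp where "Cp = (\<Sum>j\<le>N. smult (wt j) (cheb (dk j)))"
  define E where "E r = r^m' * (\<Sum>s\<le>b. real (b choose s) * real (a choose s) * (r^2-1)^s * (r^2)^(b-s))" for r :: real
  define Zp where "Zp = [:0,1:]^m' * (\<Sum>s\<le>b. smult (real (b choose s) * real (a choose s)) ([:-1,0,1:]^s * [:0,0,1:]^(b-s)))"
  have ZE: "Z r = E r" for r
  proof -
    have "jacobi_poly b 0 (real m') (2 * r^2 - 1) = (\<Sum>s\<le>b. real (b choose s) * real (a choose s) * (r^2-1)^s * (r^2)^(b-s))"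
      unfolding jacobi_poly_def
    proof (rule sum.cong)
      fix s assume "s \<in> {..b}"
      then have sb: "s \<le> b" by simp
      have g1: "(real b + 0) gchoose (b - s) = real (b choose s)"
        using binomial_symmetric[OF sb] by (simp add: binomial_gbinomial[symmetric])
      have g2: "(real b + real m') gchoose s = real (a choose s)"
        unfolding am by (simp add: binomial_gbinomial)
      have h12: "(2 * r\<^sup>2 - 1 - 1) / 2 = r^2 - 1" "(2 * r\<^sup>2 - 1 + 1) / 2 = r^2" by simp_all
      show "(real b + 0 gchoose (b - s)) * (real b + real m' gchoose s) * ((2 * r\<^sup>2 - 1 - 1) / 2) ^ s * ((2 * r\<^sup>2 - 1 + 1) / 2) ^ (b - s)
         = real (b choose s) * real (a choose s) * (r^2-1)^s * (r^2)^(b-s)"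
        unfolding g1 g2 h12 by (rule refl)
    qed simp
    then show ?thesis unfolding Z_def E_def by simp
  qed
  have ZpE: "poly Zp r = E r" for r
    unfolding Zp_def E_def by (simp add: poly_sum power2_eq_square algebra_simps)
  have wt_nn: "wt j \<ge> 0" if "j \<le> N" for j
    unfolding wt_def using AB_nonneg[of j b a] that N_def by simp
  have dkN: "dk j \<le> N" if "j \<le> N" for j unfolding dk_def using that by auto
  have ECp: "E r = poly Cp r" if r: "r \<in> {-1..1}" for r
  proof -
    define t where "t = arccos r"
    have ct: "cos t = r" unfolding t_def using r by simp
    have st: "(sin t)^2 = 1 - r^2" using sin_squared_eq[of t] ct by simp
    have "E r = (\<Sum>i\<le>a. real (b choose i) * sin t ^ i * cos t ^ (b-i) * (real (a choose (a-i)) * cos t ^ (a-i) * (- sin t) ^ (a-(a-i))))"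
    proof -
      have "(\<Sum>i\<le>a. real (b choose i) * sin t ^ i * cos t ^ (b-i) * (real (a choose (a-i)) * cos t ^ (a-i) * (- sin t) ^ (a-(a-i))))
          = (\<Sum>i\<le>b. real (b choose i) * sin t ^ i * cos t ^ (b-i) * (real (a choose (a-i)) * cos t ^ (a-i) * (- sin t) ^ (a-(a-i))))"
        by (rule sum.mono_neutral_right) (auto simp: am binomial_eq_0)
      also have "\<dots> = (\<Sum>i\<le>b. r^m' * (real (b choose i) * real (a choose i) * (r^2-1)^i * (r^2)^(b-i)))"
      proof (rule sum.cong)
        fix i assume "i \<in> {..b}"
        then have ib: "i \<le> b" by simp
        have e1: "a - (a - i) = i" "a - i = m' + (b - i)" using ib am by auto
        have e2: "sin t ^ i * (- sin t) ^ i = (r^2 - 1)^i"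
          by (simp add: power_mult_distrib[symmetric] power2_eq_square[symmetric] st)
        have e3: "real (a choose (a-i)) = real (a choose i)"
          using binomial_symmetric[of i a] ib am by simp
        have "real (b choose i) * sin t ^ i * cos t ^ (b-i) * (real (a choose (a-i)) * cos t ^ (a-i) * (- sin t) ^ (a-(a-i)))
           = real (b choose i) * real (a choose i) * (sin t ^ i * (- sin t) ^ i) * (cos t ^ m' * (cos t ^ (b-i) * cos t ^ (b-i)))"
          unfolding e1(1) unfolding e3 unfolding e1(2) by (simp add: power_add mult_ac)
        also have "\<dots> = r^m' * (real (b choose i) * real (a choose i) * (r^2-1)^i * (r^2)^(b-i))"
          unfolding e2 ct by (simp add: power_mult_distrib[symmetric] power2_eq_square mult_ac)
        finally show "real (b choose i) * sin t ^ i * cos t ^ (b-i) * (real (a choose (a-i)) * cos t ^ (a-i) * (- sin t) ^ (a-(a-i)))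
           = r^m' * (real (b choose i) * real (a choose i) * (r^2-1)^i * (r^2)^(b-i))" .
      qed simp
      also have "\<dots> = E r" unfolding E_def sum_distrib_left ..
      finally show ?thesis ..
    qed
    also have "\<dots> = (\<Sum>k\<le>b+a. Aq a b k * Bp a b k / 2^(b+a) * cos ((real k - real (b+a-k)) * t))"
      by (rule key)
    also have "\<dots> = (\<Sum>k\<le>N. wt k * poly (cheb (dk k)) r)"
    proof (rule sum.cong)
      fix k assume "k \<in> {..N}"
      then have kN: "k \<le> N" by simp
      have "cos ((real k - real (b+a-k)) * t) = cos (real (dk k) * t)"
      proof (cases "N \<le> 2*k")
        case True
        then have "real (dk k) = real k - real (b+a-k)" unfolding dk_def N_def using kN N_def by auto
        then show ?thesis by simp
      next
        case False
        then have "real (dk k) = - (real k - real (b+a-k))" unfolding dk_def N_def using kN N_def by auto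
        then show ?thesis by (metis cos_minus mult_minus_left)
      qed
      then show "Aq a b k * Bp a b k / 2^(b+a) * cos ((real k - real (b+a-k)) * t) = wt k * poly (cheb (dk k)) r"
        unfolding wt_def using cheb_cos[of "dk k" t] ct by simp
    qed (simp add: N_def)
    also have "\<dots> = poly Cp r" unfolding Cp_def by (simp add: poly_sum)
    finally show ?thesis .
  qed
  have ZpCp: "Zp = Cp" by (rule ext_Icc) (simp add: ZpE ECp)
  have ZC: "Z = poly Cp" by (rule ext) (simp add: ZE ZpE[symmetric] ZpCp)
  have cnnC: "cnn ((pderiv^^k) Cp)" unfolding Cp_def
    by (intro cnn_pderivs cnn_sum) (auto simp: wt_nn)
  have sum1: "(\<Sum>j\<le>N. wt j) = 1"
  proof -
    have "(\<Sum>j\<le>N. wt j) = poly Cp 1" unfolding Cp_def by (simp add: poly_sum cheb_one)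
    also have "\<dots> = E 1" using ECp[of 1] by simp
    also have "\<dots> = 1" unfolding E_def by (simp add: power_0_left if_distrib[of "\<lambda>x. _ * x"] sum.delta cong: if_cong)
    finally show ?thesis .
  qed
  have top: "poly ((pderiv^^k) Cp) 1 \<le> Mk (real N) k"
  proof -
    have "poly ((pderiv^^k) Cp) 1 = (\<Sum>j\<le>N. wt j * Mk (real (dk j)) k)"
      unfolding Cp_def higher_pderiv_sum higher_pderiv_smult by (simp add: poly_sum deriv_cheb_one)
    also have "\<dots> \<le> (\<Sum>j\<le>N. wt j * Mk (real N) k)"
      by (intro sum_mono mult_left_mono Mk_mono) (auto simp: wt_nn dkN)
    also have "\<dots> = Mk (real N) k" unfolding sum_distrib_right[symmetric] sum1 by simp
    finally show ?thesis .
  qed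
  show ?thesis
  proof
    fix r :: real assume r: "r \<in> {-1..1}"
    have "\<bar>(deriv^^k) Z r\<bar> = \<bar>poly ((pderiv^^k) Cp) r\<bar>" unfolding ZC higher_deriv_poly ..
    also have "\<dots> \<le> poly ((pderiv^^k) Cp) 1" using cnn_bound[OF cnnC] r by auto
    also have "\<dots> \<le> Mk (real (b+a)) k" using top unfolding N_def .
    finally show "\<bar>(deriv^^k) Z r\<bar> \<le> Mk (real (b+a)) k" .
  qed
qed



lemma poch_half: "2^k * pochhammer (1/2::real) k = (\<Prod>i<k. 2 * real i + 1)"
proof (induction k)
  case 0 then show ?case by simp
next
  case (Suc k)
  have "2^(Suc k) * pochhammer (1/2::real) (Suc k) = (2^k * pochhammer (1/2) k) * (2 * (1/2 + real k))"
    by (simp add: pochhammer_Suc mult_ac)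
  also have "\<dots> = (\<Prod>i<Suc k. 2 * real i + 1)" using Suc by (simp add: algebra_simps)
  finally show ?case .
qed

theorem mainTheorem1:
  fixes n m :: int and k :: nat
  assumes "even (n - \<bar>m\<bar>)" and "\<bar>m\<bar> \<le> n"
  shows "\<forall>r\<in>{0..1::real}.
           \<bar>(deriv ^^ k) (zernike_radial n m) r\<bar>
             \<le> (\<Prod>j<k. (of_int n)\<^sup>2 - (real j)\<^sup>2) / (2 ^ k * pochhammer (1/2) k)"
proof
  fix r :: real assume r: "r \<in> {0..1}"
  define m' where "m' = nat \<bar>m\<bar>"
  define b where "b = nat ((n - \<bar>m\<bar>) div 2)"
  define a where "a = b + m'"
  have Zeq: "zernike_radial n m = (\<lambda>r::real. r ^ m' * jacobi_poly b 0 (real m') (2 * r^2 - 1))"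
    unfolding zernike_radial_def m'_def b_def by (rule ext) (simp only: of_nat_nat abs_ge_zero)
  have d2: "(n - \<bar>m\<bar>) div 2 * 2 = n - \<bar>m\<bar>" using assms(1) by (simp add: dvd_div_mult_self)
  have d0: "(n - \<bar>m\<bar>) div 2 \<ge> 0" using assms(2) by simp
  have ib: "int b = (n - \<bar>m\<bar>) div 2" unfolding b_def using d0 by simp
  have im: "int m' = \<bar>m\<bar>" unfolding m'_def by simp
  have "int (b + a) = int b * 2 + int m'" unfolding a_def by simp
  then have nN: "n = int (b + a)" unfolding ib im d2 by simp
  have ofn: "(of_int n :: real) = real (b + a)" unfolding nN by simp
  have R: "(\<Prod>j<k. (of_int n)\<^sup>2 - (real j)\<^sup>2) / (2 ^ k * pochhammer (1/2) k) = Mk (real (b+a)) k"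
    unfolding ofn poch_half Mk_def prod_dividef ..
  have "r \<in> {-1..1}" using r by simp
  have H: "\<forall>r\<in>{-1..1}. \<bar>(deriv ^^ k) (\<lambda>r::real. r ^ m' * jacobi_poly b 0 (real m') (2 * r^2 - 1)) r\<bar> \<le> Mk (real (b+a)) k"
    by (rule main_nat[OF a_def])
  then have "\<bar>(deriv ^^ k) (zernike_radial n m) r\<bar> \<le> Mk (real (b+a)) k"
    unfolding Zeq using \<open>r \<in> {-1..1}\<close> by (rule bspec)
  then show "\<bar>(deriv ^^ k) (zernike_radial n m) r\<bar> \<le> (\<Prod>j<k. (of_int n)\<^sup>2 - (real j)\<^sup>2) / (2 ^ k * pochhammer (1/2) k)"
    unfolding R .
qed

end
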